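(* Let $\mathcal{R}$ be a finite valuation ring of order $q^r$, where $q$ is a power of an odd prime. For every constant $c>0$ there is a constant $C>0$ depending only on $c$ such that: for every $\mathcal{A}\subset\mathcal{R}$ with $|\mathcal{A}|\ge 2q^{r-1}$ and $|\mathcal{A}+\mathcal{A}|\,|\mathcal{A}|^2\ge c\,q^{3r-1}$, \[\max\{|\mathcal{A}+\mathcal{A}|,\ |\mathcal{A}^2+\mathcal{A}^2|\}\ \ge\ C\,q^{r/3}|\mathcal{A}|^{2/3}.\]
   Context: A finite valuation ring is a finite, local, principal commutative ring with identity. Its unique maximal ideal is $(z)$ for a uniformizer $z$; the residue field $\mathcal{R}/(z)$ has $q$ elements; $r$ is the smallest positive integer with $z^r=0$; then $|\mathcal{R}|=q^r$ and $|(z)|=q^{r-1}$. For $\mathcal{A}\subset\mathcal{R}$: $\mathcal{A}+\mathcal{A}=\{a+b: a,b\in\mathcal{A}\}$, $\mathcal{A}^2=\{x^2: x\in\mathcal{A}\}$, and $\mathcal{A}^2+\mathcal{A}^2=\{u+v: u,v\in\mathcal{A}^2\}$. *)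

theory Defs
  imports "HOL-Algebra.Algebra" "HOL-Computational_Algebra.Primes"
begin

definition finite_valuation_ring :: "('a, 'b) ring_scheme \<Rightarrow> bool" where
  "finite_valuation_ring R \<longleftrightarrow>
     cring R \<and> finite (carrier R) \<and>
     (\<exists>!M. maximalideal M R) \<and>
     (\<forall>I. ideal I R \<longrightarrow> principalideal I R)"

definition ring_sumset :: "('a, 'b) ring_scheme \<Rightarrow> 'a set \<Rightarrow> 'a set" where
  "ring_sumset R A = {a \<oplus>\<^bsub>R\<^esub> b | a b. a \<in> A \<and> b \<in> A}"

definition ring_squares :: "('a, 'b) ring_scheme \<Rightarrow> 'a set \<Rightarrow> 'a set" where
  "ring_squares R A = (\<lambda>x. x \<otimes>\<^bsub>R\<^esub> x) ` A"

end

theory Submission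
  imports Defs "HOL-Analysis.Convex"
begin

lemma card_fib:
  assumes "finite S" "\<And>t. t \<in> f ` S \<Longrightarrow> card {s\<in>S. f s = t} = k"
  shows "card S = card (f ` S) * k"
proof -
  have S: "S = (\<Union>t\<in>f`S. {s\<in>S. f s = t})" by auto
  have "card S = (\<Sum>t\<in>f`S. card {s\<in>S. f s = t})"
    by (subst S, rule card_UN_disjoint) (use assms in auto)
  also have "\<dots> = (\<Sum>t\<in>f`S. k)" using assms(2) by simp
  finally show ?thesis by simp
qed

locale fvr = cring R for R :: "('a,'b) ring_scheme" (structure) +
  fixes z
  assumes fin: "finite (carrier R)" and uniq: "\<exists>!M. maximalideal M R"
   and zc: "z \<in> carrier R" and zmax: "maximalideal (PIdl z) R"
begin

abbreviation "MM \<equiv> PIdl z"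

lemma M_add: "additive_subgroup MM R" using zmax by (simp add: maximalideal_def ideal_def)

lemma M_ideal: "ideal MM R" using zmax by (simp add: maximalideal_def)

lemma M_sub: "MM \<subseteq> carrier R"
  using M_ideal additive_subgroup.a_subset ideal.axioms(1) by blast

lemma one_notin_M: "\<one> \<notin> MM"
  using ideal.one_imp_carrier[OF M_ideal] maximalideal.I_notcarr[OF zmax] by metis

lemma zero_in_M: "\<zero> \<in> MM"
  using M_ideal additive_subgroup.zero_closed ideal.axioms(1) by blast

lemma z_in_M: "z \<in> MM" using cgenideal_self zc by blast

lemma one_ne_zero: "\<one> \<noteq> \<zero>" using one_notin_M zero_in_M by metis

lemma unit_notin_M: assumes "u \<in> Units R" shows "u \<notin> MM"
proof
  assume "u \<in> MM"
  hence "inv u \<otimes> u \<in> MM" using ideal.I_l_closed[OF M_ideal] assms by blast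
  thus False using assms one_notin_M by simp
qed

lemma nonunit_in_M:
  assumes a: "a \<in> carrier R" and na: "a \<notin> Units R" shows "a \<in> MM"
proof -
  let ?S = "{J. ideal J R \<and> a \<in> J \<and> \<one> \<notin> J}"
  have fS: "finite ?S"
  proof (rule finite_subset)
    show "?S \<subseteq> Pow (carrier R)"
      using additive_subgroup.a_subset ideal.axioms(1) by blast
  qed (use fin in auto)
  have "PIdl a \<in> ?S"
  proof -
    have "\<one> \<notin> PIdl a"
    proof
      assume "\<one> \<in> PIdl a"
      then obtain x where x: "x \<in> carrier R" "\<one> = x \<otimes> a" unfolding cgenideal_def by auto
      hence "x \<otimes> a = \<one>" "a \<otimes> x = \<one>" using a m_comm[of x a] by auto
      hence "a \<in> Units R" unfolding Units_def using a x by blast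
      thus False using na by simp
    qed
    thus ?thesis using cgenideal_ideal[OF a] cgenideal_self[OF a] by auto
  qed
  hence ne: "?S \<noteq> {}" by blast
  obtain J where J: "J \<in> ?S" and Jmax: "\<And>b. b \<in> ?S \<Longrightarrow> J \<le> b \<Longrightarrow> J = b"
    using finite_has_maximal[OF fS ne] by blast
  have "maximalideal J R"
  proof (rule maximalidealI)
    show "ideal J R" using J by simp
    show "carrier R \<noteq> J" using J one_closed by blast
    fix J' assume J': "ideal J' R" "J \<subseteq> J'" "J' \<subseteq> carrier R"
    show "J' = J \<or> J' = carrier R"
    proof (cases "\<one> \<in> J'")
      case True thus ?thesis using ideal.one_imp_carrier[OF J'(1)] by simp
    next
      case False
      hence "J' \<in> ?S" using J' J by auto
      thus ?thesis using Jmax J'(2) by blast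
    qed
  qed
  moreover obtain M0 where "\<forall>y. maximalideal y R \<longrightarrow> y = M0" using uniq by blast
  ultimately have "J = MM" using zmax by metis
  thus ?thesis using J by simp
qed

lemma units_iff: "a \<in> carrier R \<Longrightarrow> a \<in> Units R \<longleftrightarrow> a \<notin> MM"
  using nonunit_in_M unit_notin_M by blast

lemma unit_plus_M: assumes u: "u \<in> Units R" and t: "t \<in> MM" shows "u \<oplus> t \<in> Units R"
proof -
  have tc: "t \<in> carrier R" using t M_sub by blast
  have uc: "u \<in> carrier R" using u by (rule Units_closed)
  have "u \<oplus> t \<notin> MM"
  proof
    assume "u \<oplus> t \<in> MM"
    hence "(u \<oplus> t) \<oplus> (\<ominus> t) \<in> MM"
      using t additive_subgroup.a_closed[OF M_add] additive_subgroup.a_inv_closed[OF M_add] by blast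
    moreover have "(u \<oplus> t) \<oplus> (\<ominus> t) = u" using uc tc by algebra
    ultimately show False using unit_notin_M u by simp
  qed
  thus ?thesis using units_iff uc tc by simp
qed

lemma unit_zero_div: "u \<in> Units R \<Longrightarrow> w \<in> carrier R \<Longrightarrow> w \<otimes> u = \<zero> \<Longrightarrow> w = \<zero>"
proof -
  assume u: "u \<in> Units R" and w: "w \<in> carrier R" and e: "w \<otimes> u = \<zero>"
  have uc: "u \<in> carrier R" "inv u \<in> carrier R" using u by auto
  have "w = w \<otimes> (u \<otimes> inv u)" using u w by simp
  also have "\<dots> = (w \<otimes> u) \<otimes> inv u" using uc w by (simp add: m_assoc)
  also have "\<dots> = \<zero>" using e uc by simp
  finally show "w = \<zero>" .
qed

lemma exists_nilp: "\<exists>n::nat>0. z [^] n = \<zero>"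
proof -
  define I where "I n = PIdl (z [^] n)" for n :: nat
  have sub: "I (Suc n) \<subseteq> I n" for n
  proof
    fix y assume "y \<in> I (Suc n)"
    then obtain x where x: "x \<in> carrier R" "y = x \<otimes> z [^] Suc n" unfolding I_def cgenideal_def by auto
    have "x \<otimes> z [^] Suc n = (x \<otimes> z) \<otimes> z [^] n" using x zc by (simp add: m_assoc m_comm[of "z [^] n" z])
    hence "y = (x \<otimes> z) \<otimes> z [^] n" using x by simp
    thus "y \<in> I n" unfolding I_def cgenideal_def using x zc by blast
  qed
  have finI: "finite (I n)" for n
    by (rule finite_subset[OF _ fin]) (unfold I_def cgenideal_def, use zc in blast)
  have "\<exists>n. card (I (Suc n)) = card (I n)"
  proof (rule ccontr)
    assume "\<nexists>n. card (I (Suc n)) = card (I n)"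
    hence lt: "card (I (Suc n)) < card (I n)" for n
      using card_mono[OF finI sub, of n] by (simp add: order_less_le)
    have "card (I n) + n \<le> card (I 0)" for n
    proof (induction n)
      case (Suc n) thus ?case using lt[of n] by linarith
    qed simp
    from this[of "Suc (card (I 0))"] show False by simp
  qed
  then obtain n where "card (I (Suc n)) = card (I n)" by blast
  hence eq: "I (Suc n) = I n" using card_subset_eq[OF finI sub] by simp
  have zn: "z [^] n \<in> carrier R" using zc by simp
  have "z [^] n \<in> I (Suc n)" using eq cgenideal_self[OF zn] unfolding I_def by simp
  then obtain b where b: "b \<in> carrier R" "z [^] n = b \<otimes> z [^] Suc n"
    unfolding I_def cgenideal_def by auto
  have e: "z [^] n \<otimes> (\<one> \<ominus> b \<otimes> z) = \<zero>"
  proof -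
    have 1: "b \<otimes> (z [^] n \<otimes> z) = z [^] n" using b by simp
    have "z [^] n \<otimes> (\<one> \<ominus> b \<otimes> z) = z [^] n \<ominus> b \<otimes> (z [^] n \<otimes> z)"
      using zn b zc by algebra
    also have "\<dots> = z [^] n \<ominus> z [^] n" by (simp only: 1)
    also have "\<dots> = \<zero>" using zn by algebra
    finally show ?thesis .
  qed
  have bz: "b \<otimes> z \<in> MM" using ideal.I_l_closed[OF M_ideal z_in_M b(1)] .
  have "\<one> \<ominus> b \<otimes> z \<in> Units R"
  proof -
    have "\<ominus> (b \<otimes> z) \<in> MM" using bz additive_subgroup.a_inv_closed[OF M_add] by blast
    hence "\<one> \<oplus> \<ominus> (b \<otimes> z) \<in> Units R" using unit_plus_M[of \<one>] by simp
    thus ?thesis by (simp add: minus_eq)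
  qed
  hence "z [^] n = \<zero>" using unit_zero_div[OF _ zn e] by blast
  hence "z [^] Suc n = \<zero>" using zc by simp
  thus ?thesis using zero_less_Suc by blast
qed

end

context fvr begin

definition "r0 = (LEAST n::nat. n > 0 \<and> z [^] n = \<zero>)"
definition "qq = card (a_rcosets MM)"
definition "Ann w = {n \<in> carrier R. w \<otimes> n = \<zero>}"

lemma r0: "r0 > 0" "z [^] r0 = \<zero>"
  using LeastI_ex[OF exists_nilp] unfolding r0_def by auto

lemma r0_min: "i < r0 \<Longrightarrow> z [^] i \<noteq> \<zero>"
proof (cases i)
  case 0 thus ?thesis using one_ne_zero by simp
next
  case (Suc k) assume "i < r0"
  thus ?thesis using not_less_Least[of i "\<lambda>n::nat. n > 0 \<and> z [^] n = \<zero>"] Suc unfolding r0_def by auto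
qed

lemma lagr: "qq * card MM = card (carrier R)"
  using a_lagrange[OF fin M_add] unfolding qq_def order_def by simp

lemma Ann_sub: assumes "i < r0" shows "Ann (z [^] i) \<subseteq> MM"
proof
  fix n assume n: "n \<in> Ann (z [^] i)"
  show "n \<in> MM"
  proof (rule ccontr)
    assume "n \<notin> MM"
    hence "n \<in> Units R" using units_iff n unfolding Ann_def by auto
    hence "z [^] i = \<zero>" using unit_zero_div[of n "z [^] i"] n zc unfolding Ann_def
      by (simp add: m_comm[of _ n])
    thus False using r0_min assms by blast
  qed
qed

lemma mult_fiber:
  assumes w: "w \<in> carrier R" and S: "S \<subseteq> carrier R"
    and cl: "\<And>a n. a \<in> S \<Longrightarrow> n \<in> Ann w \<Longrightarrow> a \<oplus> n \<in> S"
  shows "card S = card ((\<lambda>a. w \<otimes> a) ` S) * card (Ann w)"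
proof (rule card_fib)
  show "finite S" using S fin finite_subset by blast
  fix t assume "t \<in> (\<lambda>a. w \<otimes> a) ` S"
  then obtain a0 where a0: "a0 \<in> S" "t = w \<otimes> a0" by blast
  have a0c: "a0 \<in> carrier R" using a0 S by blast
  have "{s \<in> S. w \<otimes> s = t} = (\<lambda>n. a0 \<oplus> n) ` Ann w"
  proof (intro equalityI subsetI)
    fix s assume "s \<in> {s \<in> S. w \<otimes> s = t}"
    hence s: "s \<in> S" "w \<otimes> s = t" by auto
    have sc: "s \<in> carrier R" using s S by blast
    have "w \<otimes> (\<ominus> a0 \<oplus> s) = \<ominus> (w \<otimes> a0) \<oplus> w \<otimes> s" using w sc a0c by algebra
    also have "\<dots> = \<zero>" using s a0 w a0c l_neg[OF m_closed[OF w a0c]] by simp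
    finally have "\<ominus> a0 \<oplus> s \<in> Ann w" unfolding Ann_def using sc a0c by simp
    moreover have "s = a0 \<oplus> (\<ominus> a0 \<oplus> s)" using sc a0c by algebra
    ultimately show "s \<in> (\<lambda>n. a0 \<oplus> n) ` Ann w" by blast
  next
    fix x assume "x \<in> (\<lambda>n. a0 \<oplus> n) ` Ann w"
    then obtain n where n: "n \<in> Ann w" "x = a0 \<oplus> n" by blast
    have "a0 \<oplus> n \<in> S" using cl a0 n by blast
    have nc: "n \<in> carrier R" "w \<otimes> n = \<zero>" using n unfolding Ann_def by auto
    have "w \<otimes> (a0 \<oplus> n) = w \<otimes> a0 \<oplus> w \<otimes> n" using w nc a0c by algebra
    hence "w \<otimes> (a0 \<oplus> n) = t" using nc a0 w a0c by simp
    thus "x \<in> {s \<in> S. w \<otimes> s = t}" using n \<open>a0 \<oplus> n \<in> S\<close> by simp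
  qed
  moreover have "inj_on (\<lambda>n. a0 \<oplus> n) (Ann w)"
  proof (rule inj_onI)
    fix x y assume xy: "x \<in> Ann w" "y \<in> Ann w" "a0 \<oplus> x = a0 \<oplus> y"
    have "x \<in> carrier R" "y \<in> carrier R" using xy unfolding Ann_def by auto
    moreover have "x = \<ominus> a0 \<oplus> (a0 \<oplus> x)" "y = \<ominus> a0 \<oplus> (a0 \<oplus> y)"
      using a0c calculation by algebra+
    ultimately show "x = y" using xy by metis
  qed
  ultimately show "card {s \<in> S. w \<otimes> s = t} = card (Ann w)" by (simp add: card_image)
qed

definition "II (i::nat) = (\<lambda>a. z [^] i \<otimes> a) ` carrier R"

lemma Ann_pos: "w \<in> carrier R \<Longrightarrow> card (Ann w) > 0"
proof -
  assume "w \<in> carrier R"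
  hence "\<zero> \<in> Ann w" unfolding Ann_def by simp
  moreover have "finite (Ann w)" using fin unfolding Ann_def by simp
  ultimately show ?thesis by (auto simp: card_gt_0_iff)
qed

lemma II_card: "card (II i) * card (Ann (z [^] i)) = card (carrier R)"
  using mult_fiber[of "z [^] i" "carrier R"] zc unfolding II_def by (simp add: Ann_def)

lemma II_M: assumes "i < r0" shows "card (II (Suc i)) * card (Ann (z [^] i)) = card MM"
proof -
  have "(\<lambda>a. z [^] i \<otimes> a) ` MM = II (Suc i)"
  proof safe
    fix a assume "a \<in> MM"
    then obtain x where x: "x \<in> carrier R" "a = x \<otimes> z" unfolding cgenideal_def by blast
    have "z [^] i \<otimes> (x \<otimes> z) = z [^] Suc i \<otimes> x" using x zc
      by (simp add: m_assoc m_comm[of x z])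
    thus "z [^] i \<otimes> a \<in> II (Suc i)" using x unfolding II_def by auto
  next
    fix y assume "y \<in> II (Suc i)"
    then obtain x where x: "x \<in> carrier R" "y = z [^] Suc i \<otimes> x" unfolding II_def by blast
    have "z [^] i \<otimes> (x \<otimes> z) = z [^] Suc i \<otimes> x" using x zc
      by (simp add: m_assoc m_comm[of x z])
    moreover have "x \<otimes> z \<in> MM" using x unfolding cgenideal_def by blast
    ultimately show "y \<in> (\<lambda>a. z [^] i \<otimes> a) ` MM" using x by (metis image_eqI)
  qed
  moreover have "card MM = card ((\<lambda>a. z [^] i \<otimes> a) ` MM) * card (Ann (z [^] i))"
  proof (rule mult_fiber)
    show "z [^] i \<in> carrier R" using zc by simp
    show "MM \<subseteq> carrier R" by (rule M_sub)
    fix a n assume "a \<in> MM" "n \<in> Ann (z [^] i)"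
    thus "a \<oplus> n \<in> MM" using Ann_sub[OF assms] additive_subgroup.a_closed[OF M_add] by blast
  qed
  ultimately show ?thesis by simp
qed

lemma II_step: assumes "i < r0" shows "card (II i) = qq * card (II (Suc i))"
proof -
  have "card (II i) * card (Ann (z [^] i)) = (qq * card (II (Suc i))) * card (Ann (z [^] i))"
    using II_card[of i] II_M[OF assms] lagr by (simp add: mult.assoc)
  moreover have "card (Ann (z [^] i)) > 0" using Ann_pos zc by simp
  ultimately show ?thesis by simp
qed

lemma II_0: "II 0 = carrier R" unfolding II_def by auto

lemma II_r0: "II r0 = {\<zero>}"
proof -
  have "carrier R \<noteq> {}" by auto
  thus ?thesis unfolding II_def using r0(2) by auto
qed

lemma card_R: "card (carrier R) = qq ^ r0"
proof -
  have "j \<le> r0 \<Longrightarrow> card (II (r0 - j)) = qq ^ j" for j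
  proof (induction j)
    case 0 thus ?case using II_r0 by simp
  next
    case (Suc j)
    hence "r0 - Suc j < r0" "Suc (r0 - Suc j) = r0 - j" by auto
    thus ?case using II_step[of "r0 - Suc j"] Suc by simp
  qed
  from this[of r0] show ?thesis using II_0 by simp
qed

lemma qq_pos: "qq > 0"
proof -
  have "card (carrier R) > 0" using fin by (auto simp: card_gt_0_iff)
  thus ?thesis using lagr by (cases qq) auto
qed

lemma card_M: "card MM = qq ^ (r0 - 1)"
proof -
  have "qq * card MM = qq * qq ^ (r0 - 1)" using lagr card_R r0(1)
    by (metis Suc_diff_1 power_Suc)
  thus ?thesis using qq_pos by simp
qed

end

context fvr begin

lemma two_unit: assumes odd: "odd qq" shows "\<one> \<oplus> \<one> \<in> Units R"
proof (rule ccontr)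
  assume "\<one> \<oplus> \<one> \<notin> Units R"
  hence two: "\<one> \<oplus> \<one> \<in> MM" using units_iff by simp
  have Mc: "\<And>a b. a \<in> MM \<Longrightarrow> b \<in> MM \<Longrightarrow> a \<oplus> b \<in> MM"
    using additive_subgroup.a_closed[OF M_add] by blast
  have Mi: "\<And>a. a \<in> MM \<Longrightarrow> \<ominus> a \<in> MM"
    using additive_subgroup.a_inv_closed[OF M_add] by blast
  have Ms: "\<And>a. a \<in> MM \<Longrightarrow> a \<in> carrier R" using M_sub by blast
  define H where "H = MM \<union> (\<lambda>t. \<one> \<oplus> t) ` MM"
  have sg: "subgroup H (add_monoid R)"
  proof (rule add.subgroupI)
    show "H \<subseteq> carrier R" using M_sub unfolding H_def by auto
    show "H \<noteq> {}" using zero_in_M unfolding H_def by auto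
  next
    fix a assume "a \<in> H"
    thus "\<ominus> a \<in> H"
    proof (unfold H_def, elim UnE imageE)
      assume "a \<in> MM" thus "\<ominus> a \<in> MM \<union> (\<lambda>t. \<one> \<oplus> t) ` MM"
        using Mi by simp
    next
      fix t assume t: "t \<in> MM" "a = \<one> \<oplus> t"
      have "\<ominus> a = \<one> \<oplus> (\<ominus> (\<one> \<oplus> \<one>) \<oplus> \<ominus> t)" using t Ms[OF t(1)] by algebra
      moreover have "\<ominus> (\<one> \<oplus> \<one>) \<oplus> \<ominus> t \<in> MM" using Mc Mi two t by blast
      ultimately show "\<ominus> a \<in> MM \<union> (\<lambda>t. \<one> \<oplus> t) ` MM"
        by simp
    qed
  next
    fix a b assume ab: "a \<in> H" "b \<in> H"
    show "a \<oplus> b \<in> H"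
    proof (cases "a \<in> MM")
      case aM: True
      show ?thesis
      proof (cases "b \<in> MM")
        case True hence "a \<oplus> b \<in> MM" using aM Mc by blast
        thus ?thesis unfolding H_def by blast
      next
        case False
        then obtain t where t: "t \<in> MM" "b = \<one> \<oplus> t" using ab unfolding H_def by blast
        have "a \<oplus> b = \<one> \<oplus> (a \<oplus> t)" using t Ms[OF t(1)] Ms[OF aM] by algebra
        hence "a \<oplus> b \<in> (\<lambda>t. \<one> \<oplus> t) ` MM" using Mc[OF aM t(1)] by blast
        thus ?thesis unfolding H_def by blast
      qed
    next
      case False
      then obtain s where s: "s \<in> MM" "a = \<one> \<oplus> s" using ab unfolding H_def by blast
      show ?thesis
      proof (cases "b \<in> MM")
        case True
        have "a \<oplus> b = \<one> \<oplus> (s \<oplus> b)" using s Ms[OF s(1)] Ms[OF True] by algebra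
        hence "a \<oplus> b \<in> (\<lambda>t. \<one> \<oplus> t) ` MM" using Mc[OF s(1) True] by blast
        thus ?thesis unfolding H_def by blast
      next
        case False
        then obtain t where t: "t \<in> MM" "b = \<one> \<oplus> t" using ab unfolding H_def by blast
        have "a \<oplus> b = (\<one> \<oplus> \<one>) \<oplus> (s \<oplus> t)" using t s Ms[OF t(1)] Ms[OF s(1)] by algebra
        hence "a \<oplus> b \<in> MM" using Mc[OF two Mc[OF s(1) t(1)]] by simp
        thus ?thesis unfolding H_def by blast
      qed
    qed
  qed
  have cH: "card H = 2 * card MM"
  proof -
    have fM: "finite MM" using M_sub fin finite_subset by blast
    have dis: "MM \<inter> (\<lambda>t. \<one> \<oplus> t) ` MM = {}"
    proof (rule ccontr)
      assume "MM \<inter> (\<lambda>t. \<one> \<oplus> t) ` MM \<noteq> {}"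
      then obtain t where t: "t \<in> MM" "\<one> \<oplus> t \<in> MM" by blast
      have "(\<one> \<oplus> t) \<oplus> \<ominus> t = \<one>" using Ms[OF t(1)] by algebra
      moreover have "(\<one> \<oplus> t) \<oplus> \<ominus> t \<in> MM" using Mc Mi t by blast
      ultimately show False using one_notin_M by simp
    qed
    have inj: "inj_on (\<lambda>t. \<one> \<oplus> t) MM"
    proof (rule inj_onI)
      fix x y assume xy: "x \<in> MM" "y \<in> MM" "\<one> \<oplus> x = \<one> \<oplus> y"
      have "x = \<ominus> \<one> \<oplus> (\<one> \<oplus> x)" using Ms[OF xy(1)] by algebra
      also have "\<dots> = \<ominus> \<one> \<oplus> (\<one> \<oplus> y)" using xy(3) by (simp only:)
      also have "\<dots> = y" using Ms[OF xy(2)] by algebra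
      finally show "x = y" .
    qed
    show ?thesis unfolding H_def using card_Un_disjoint[OF fM finite_imageI[OF fM] dis] card_image[OF inj]
      by simp
  qed
  have "card (a_rcosets H) * card H = card (carrier R)"
    using a_lagrange[OF fin additive_subgroupI[OF sg]] unfolding order_def by simp
  hence "card (a_rcosets H) * 2 * card MM = qq * card MM" using cH lagr by (simp add: mult.assoc)
  moreover have "card MM > 0" using zero_in_M M_sub fin finite_subset by (auto simp: card_gt_0_iff)
  ultimately have "qq = card (a_rcosets H) * 2" by simp
  thus False using odd by simp
qed

end

context fvr begin
lemma sq_eq:
  assumes two: "\<one> \<oplus> \<one> \<in> Units R" and c: "c \<in> Units R" and d: "d \<in> Units R"
    and e: "c \<otimes> c = d \<otimes> d"
  shows "d = c \<or> d = \<ominus> c"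
proof -
  have cc: "c \<in> carrier R" and dc: "d \<in> carrier R" using c d by auto
  have "(c \<ominus> d) \<otimes> (c \<oplus> d) = c \<otimes> c \<ominus> d \<otimes> d" using cc dc by algebra
  also have "\<dots> = \<zero>" using e dc by (simp add: minus_eq r_neg)
  finally have p: "(c \<ominus> d) \<otimes> (c \<oplus> d) = \<zero>" .
  show ?thesis
  proof (cases "c \<ominus> d \<in> Units R")
    case True
    hence "c \<oplus> d = \<zero>" using unit_zero_div[of "c \<ominus> d" "c \<oplus> d"] p cc dc by (simp add: m_comm)
    moreover have "d = (c \<oplus> d) \<oplus> \<ominus> c" using cc dc by algebra
    ultimately have "d = \<zero> \<oplus> \<ominus> c" by simp
    thus ?thesis using cc by simp
  next
    case False
    hence m: "c \<ominus> d \<in> MM" using units_iff cc dc by simp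
    hence "\<ominus> (c \<ominus> d) \<in> MM" using additive_subgroup.a_inv_closed[OF M_add] by blast
    moreover have "(\<one> \<oplus> \<one>) \<otimes> c \<in> Units R" using two c by (rule Units_m_closed)
    ultimately have "(\<one> \<oplus> \<one>) \<otimes> c \<oplus> \<ominus> (c \<ominus> d) \<in> Units R" by (rule unit_plus_M[rotated])
    moreover have "(\<one> \<oplus> \<one>) \<otimes> c \<oplus> \<ominus> (c \<ominus> d) = c \<oplus> d" using cc dc by algebra
    ultimately have "c \<ominus> d = \<zero>" using unit_zero_div[of "c \<oplus> d" "c \<ominus> d"] p cc dc by simp
    moreover have "d = c \<ominus> (c \<ominus> d)" using cc dc by algebra
    ultimately show ?thesis using cc by simp
  qed
qed

end

context fvr begin

definition "Kf x y mm = y \<oplus> \<ominus> (x \<otimes> x \<oplus> mm \<otimes> x)"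
definition "XX A = ring_sumset R A"
definition "YY A = ring_sumset R (ring_squares R A)"
definition "PP A = XX A \<times> YY A"
definition "Qi p l \<longleftrightarrow> snd l = Kf (fst p) (snd p) (fst l)"
definition "nl A l = card {p \<in> PP A. Qi p l}"
definition "cd p p' = card {mm \<in> carrier R. Kf (fst p) (snd p) mm = Kf (fst p') (snd p') mm}"

lemma Kf_c: "x \<in> carrier R \<Longrightarrow> y \<in> carrier R \<Longrightarrow> mm \<in> carrier R \<Longrightarrow> Kf x y mm \<in> carrier R"
  unfolding Kf_def by simp

lemma XX_sub: "A \<subseteq> carrier R \<Longrightarrow> XX A \<subseteq> carrier R"
  unfolding XX_def ring_sumset_def by blast
lemma YY_sub: "A \<subseteq> carrier R \<Longrightarrow> YY A \<subseteq> carrier R"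
  unfolding YY_def ring_sumset_def ring_squares_def by blast
lemma PP_sub: "A \<subseteq> carrier R \<Longrightarrow> PP A \<subseteq> carrier R \<times> carrier R"
  unfolding PP_def using XX_sub YY_sub by blast
lemma finPP: "A \<subseteq> carrier R \<Longrightarrow> finite (PP A)"
  using PP_sub fin finite_subset by blast

lemma line_count: assumes "p \<in> carrier R \<times> carrier R"
  shows "card ((carrier R \<times> carrier R) \<inter> {l. Qi p l}) = card (carrier R)"
proof -
  have "(carrier R \<times> carrier R) \<inter> {l. Qi p l} = (\<lambda>mm. (mm, Kf (fst p) (snd p) mm)) ` carrier R"
  proof (intro equalityI subsetI)
    fix l assume "l \<in> (carrier R \<times> carrier R) \<inter> {l. Qi p l}"
    hence "fst l \<in> carrier R" "l = (fst l, Kf (fst p) (snd p) (fst l))" unfolding Qi_def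
      by (auto simp: prod_eq_iff)
    thus "l \<in> (\<lambda>mm. (mm, Kf (fst p) (snd p) mm)) ` carrier R" by blast
  next
    fix l assume "l \<in> (\<lambda>mm. (mm, Kf (fst p) (snd p) mm)) ` carrier R"
    then obtain mm where "mm \<in> carrier R" "l = (mm, Kf (fst p) (snd p) mm)" by blast
    thus "l \<in> (carrier R \<times> carrier R) \<inter> {l. Qi p l}"
      using assms Kf_c[of "fst p" "snd p" mm] unfolding Qi_def by auto
  qed
  moreover have "inj_on (\<lambda>mm. (mm, Kf (fst p) (snd p) mm)) (carrier R)" by (rule inj_onI) simp
  ultimately show ?thesis by (simp add: card_image)
qed

lemma line_count2: assumes "p \<in> carrier R \<times> carrier R"
  shows "card ((carrier R \<times> carrier R) \<inter> {l. Qi p l \<and> Qi p' l}) = cd p p'"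
proof -
  have "(carrier R \<times> carrier R) \<inter> {l. Qi p l \<and> Qi p' l} =
      (\<lambda>mm. (mm, Kf (fst p) (snd p) mm)) ` {mm \<in> carrier R. Kf (fst p) (snd p) mm = Kf (fst p') (snd p') mm}"
  proof (intro equalityI subsetI)
    fix l assume "l \<in> (carrier R \<times> carrier R) \<inter> {l. Qi p l \<and> Qi p' l}"
    hence "fst l \<in> carrier R" "l = (fst l, Kf (fst p) (snd p) (fst l))"
       "Kf (fst p) (snd p) (fst l) = Kf (fst p') (snd p') (fst l)" unfolding Qi_def
      by (auto simp: prod_eq_iff)
    thus "l \<in> (\<lambda>mm. (mm, Kf (fst p) (snd p) mm)) ` {mm \<in> carrier R. Kf (fst p) (snd p) mm = Kf (fst p') (snd p') mm}" by blast
  next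
    fix l assume "l \<in> (\<lambda>mm. (mm, Kf (fst p) (snd p) mm)) ` {mm \<in> carrier R. Kf (fst p) (snd p) mm = Kf (fst p') (snd p') mm}"
    then obtain mm where "mm \<in> carrier R" "l = (mm, Kf (fst p) (snd p) mm)"
      "Kf (fst p) (snd p) mm = Kf (fst p') (snd p') mm" by blast
    thus "l \<in> (carrier R \<times> carrier R) \<inter> {l. Qi p l \<and> Qi p' l}"
      using assms Kf_c[of "fst p" "snd p" mm] unfolding Qi_def by auto
  qed
  moreover have "inj_on (\<lambda>mm. (mm, Kf (fst p) (snd p) mm)) {mm \<in> carrier R. Kf (fst p) (snd p) mm = Kf (fst p') (snd p') mm}"
    by (rule inj_onI) simp
  note card_image[OF this]
  ultimately show ?thesis unfolding cd_def by (simp only:)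
qed

lemma nl_sum: "A \<subseteq> carrier R \<Longrightarrow> nl A l = (\<Sum>p\<in>PP A. of_bool (Qi p l))"
proof -
  assume A: "A \<subseteq> carrier R"
  have "{p \<in> PP A. Qi p l} = PP A \<inter> {p. Qi p l}" by blast
  thus ?thesis unfolding nl_def using finPP[OF A] by simp
qed

lemma S1: assumes A: "A \<subseteq> carrier R"
  shows "(\<Sum>l\<in>carrier R \<times> carrier R. nl A l) = card (PP A) * card (carrier R)"
proof -
  have "(\<Sum>l\<in>carrier R \<times> carrier R. nl A l) = (\<Sum>l\<in>carrier R \<times> carrier R. \<Sum>p\<in>PP A. of_bool (Qi p l))"
    using nl_sum[OF A] by simp
  also have "\<dots> = (\<Sum>p\<in>PP A. \<Sum>l\<in>carrier R \<times> carrier R. of_bool (Qi p l))" by (rule sum.swap)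
  also have "\<dots> = (\<Sum>p\<in>PP A. card (carrier R))"
  proof (rule sum.cong[OF refl])
    fix p assume "p \<in> PP A"
    hence "p \<in> carrier R \<times> carrier R" using PP_sub[OF A] by blast
    thus "(\<Sum>l\<in>carrier R \<times> carrier R. of_bool (Qi p l)) = card (carrier R)"
      using line_count fin by simp
  qed
  finally show ?thesis by simp
qed

lemma S2: assumes A: "A \<subseteq> carrier R"
  shows "(\<Sum>l\<in>carrier R \<times> carrier R. nl A l ^ 2) = (\<Sum>p\<in>PP A. \<Sum>p'\<in>PP A. cd p p')"
proof -
  have "(\<Sum>l\<in>carrier R \<times> carrier R. nl A l ^ 2) =
     (\<Sum>l\<in>carrier R \<times> carrier R. \<Sum>p\<in>PP A. \<Sum>p'\<in>PP A. of_bool (Qi p l \<and> Qi p' l))"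
    using nl_sum[OF A] by (simp add: power2_eq_square sum_product of_bool_conj)
  also have "\<dots> = (\<Sum>p\<in>PP A. \<Sum>l\<in>carrier R \<times> carrier R. \<Sum>p'\<in>PP A. of_bool (Qi p l \<and> Qi p' l))"
    by (rule sum.swap)
  also have "\<dots> = (\<Sum>p\<in>PP A. \<Sum>p'\<in>PP A. \<Sum>l\<in>carrier R \<times> carrier R. of_bool (Qi p l \<and> Qi p' l))"
    by (rule sum.cong[OF refl], rule sum.swap)
  also have "\<dots> = (\<Sum>p\<in>PP A. \<Sum>p'\<in>PP A. cd p p')"
  proof (intro sum.cong[OF refl])
    fix p p' assume "p \<in> PP A"
    hence "p \<in> carrier R \<times> carrier R" using PP_sub[OF A] by blast
    thus "(\<Sum>l\<in>carrier R \<times> carrier R. of_bool (Qi p l \<and> Qi p' l)) = cd p p'"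
      using line_count2 fin by simp
  qed
  finally show ?thesis .
qed

end

context fvr begin

lemma eq_iff_diff: "a \<in> carrier R \<Longrightarrow> b \<in> carrier R \<Longrightarrow> (a = b) \<longleftrightarrow> (a \<oplus> \<ominus> b = \<zero>)"
proof
  assume ab: "a \<in> carrier R" "b \<in> carrier R" and e: "a \<oplus> \<ominus> b = \<zero>"
  have "a = (a \<oplus> \<ominus> b) \<oplus> b" using ab by algebra
  also have "\<dots> = b" using e ab by simp
  finally show "a = b" .
qed (simp add: r_neg)

definition "Ef x y x' y' = (y \<oplus> \<ominus> (x \<otimes> x)) \<oplus> \<ominus> (y' \<oplus> \<ominus> (x' \<otimes> x'))"

lemma Kf_eq:
  assumes c: "x \<in> carrier R" "y \<in> carrier R" "x' \<in> carrier R" "y' \<in> carrier R" "mm \<in> carrier R"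
  shows "(Kf x y mm = Kf x' y' mm) \<longleftrightarrow> (Ef x y x' y' = mm \<otimes> (x \<oplus> \<ominus> x'))"
proof -
  have "Kf x y mm \<oplus> \<ominus> Kf x' y' mm = Ef x y x' y' \<oplus> \<ominus> (mm \<otimes> (x \<oplus> \<ominus> x'))"
    unfolding Kf_def Ef_def using c by algebra
  thus ?thesis using eq_iff_diff[of "Kf x y mm" "Kf x' y' mm"] eq_iff_diff[of "Ef x y x' y'" "mm \<otimes> (x \<oplus> \<ominus> x')"]
    c Kf_c by (simp add: Ef_def)
qed

lemma cd_unit:
  assumes c: "x \<in> carrier R" "y \<in> carrier R" "x' \<in> carrier R" "y' \<in> carrier R"
    and u: "x \<oplus> \<ominus> x' \<in> Units R"
  shows "cd (x, y) (x', y') \<le> 1"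
proof -
  have "card {mm \<in> carrier R. Kf x y mm = Kf x' y' mm} \<le> Suc 0"
  proof (subst card_le_Suc0_iff_eq)
    show "finite {mm \<in> carrier R. Kf x y mm = Kf x' y' mm}" using fin by simp
    show "\<forall>m1\<in>{mm \<in> carrier R. Kf x y mm = Kf x' y' mm}. \<forall>m2\<in>{mm \<in> carrier R. Kf x y mm = Kf x' y' mm}. m1 = m2"
    proof safe
      fix m1 m2 assume m: "m1 \<in> carrier R" "m2 \<in> carrier R" "Kf x y m1 = Kf x' y' m1" "Kf x y m2 = Kf x' y' m2"
      let ?d = "x \<oplus> \<ominus> x'"
      have dc: "?d \<in> carrier R" "inv ?d \<in> carrier R" using u by auto
      have e: "m1 \<otimes> ?d = m2 \<otimes> ?d" using Kf_eq[OF c m(1)] Kf_eq[OF c m(2)] m by simp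
      have "m1 = (m1 \<otimes> ?d) \<otimes> inv ?d" using m dc u by (simp add: m_assoc)
      also have "\<dots> = (m2 \<otimes> ?d) \<otimes> inv ?d" using e by simp
      also have "\<dots> = m2" using m dc u by (simp add: m_assoc)
      finally show "m1 = m2" .
    qed
  qed
  thus ?thesis unfolding cd_def by simp
qed

lemma cd_sum_y:
  assumes x: "x \<in> carrier R" "x' \<in> carrier R" and YS: "YS \<subseteq> carrier R"
  shows "(\<Sum>y\<in>YS. \<Sum>y'\<in>YS. cd (x, y) (x', y')) \<le> card (carrier R) * card YS"
proof -
  have fY: "finite YS" using YS fin finite_subset by blast
  have "(\<Sum>y\<in>YS. \<Sum>y'\<in>YS. cd (x, y) (x', y')) =
        (\<Sum>y\<in>YS. \<Sum>y'\<in>YS. \<Sum>mm\<in>carrier R. of_bool (Kf x y mm = Kf x' y' mm))"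
  proof (intro sum.cong[OF refl])
    fix y y'
    have "{mm \<in> carrier R. Kf x y mm = Kf x' y' mm} = carrier R \<inter> {mm. Kf x y mm = Kf x' y' mm}" by blast
    thus "cd (x, y) (x', y') = (\<Sum>mm\<in>carrier R. of_bool (Kf x y mm = Kf x' y' mm))"
      unfolding cd_def using fin by simp
  qed
  also have "\<dots> = (\<Sum>y\<in>YS. \<Sum>mm\<in>carrier R. \<Sum>y'\<in>YS. of_bool (Kf x y mm = Kf x' y' mm))"
    by (rule sum.cong[OF refl], rule sum.swap)
  also have "\<dots> = (\<Sum>mm\<in>carrier R. \<Sum>y\<in>YS. \<Sum>y'\<in>YS. of_bool (Kf x y mm = Kf x' y' mm))"
    by (rule sum.swap)
  also have "\<dots> \<le> (\<Sum>mm\<in>carrier R. \<Sum>y\<in>YS. 1)"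
  proof (intro sum_mono)
    fix mm y assume mm: "mm \<in> carrier R" and y: "y \<in> YS"
    have "card (YS \<inter> {y'. Kf x y mm = Kf x' y' mm}) \<le> Suc 0"
    proof (subst card_le_Suc0_iff_eq)
      show "finite (YS \<inter> {y'. Kf x y mm = Kf x' y' mm})" using fY by simp
      show "\<forall>a\<in>YS \<inter> {y'. Kf x y mm = Kf x' y' mm}. \<forall>b\<in>YS \<inter> {y'. Kf x y mm = Kf x' y' mm}. a = b"
      proof safe
        fix a b assume ab: "a \<in> YS" "b \<in> YS" "Kf x y mm = Kf x' a mm" "Kf x y mm = Kf x' b mm"
        have ac: "a \<in> carrier R" "b \<in> carrier R" using ab YS by auto
        have "a = Kf x' a mm \<oplus> (x' \<otimes> x' \<oplus> mm \<otimes> x')" unfolding Kf_def using ac x mm by algebra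
        also have "\<dots> = Kf x' b mm \<oplus> (x' \<otimes> x' \<oplus> mm \<otimes> x')" using ab by simp
        also have "\<dots> = b" unfolding Kf_def using ac x mm by algebra
        finally show "a = b" .
      qed
    qed
    thus "(\<Sum>y'\<in>YS. of_bool (Kf x y mm = Kf x' y' mm)) \<le> (1::nat)" using fY by simp
  qed
  also have "\<dots> = card (carrier R) * card YS" by simp
  finally show ?thesis .
qed

lemma cd_sum_y_unit:
  assumes x: "x \<in> carrier R" "x' \<in> carrier R" and YS: "YS \<subseteq> carrier R" and u: "x \<oplus> \<ominus> x' \<in> Units R"
  shows "(\<Sum>y\<in>YS. \<Sum>y'\<in>YS. cd (x, y) (x', y')) \<le> card YS * card YS"
proof -
  have "(\<Sum>y\<in>YS. \<Sum>y'\<in>YS. cd (x, y) (x', y')) \<le> (\<Sum>y\<in>YS. \<Sum>y'\<in>YS. 1)"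
    by (intro sum_mono cd_unit) (use x YS u in auto)
  thus ?thesis by simp
qed

lemma near_count:
  assumes XS: "XS \<subseteq> carrier R" and x: "x \<in> carrier R"
  shows "card (XS \<inter> {x'. x \<oplus> \<ominus> x' \<in> MM}) \<le> card MM"
proof (rule card_inj_on_le)
  show "inj_on (\<lambda>x'. x \<oplus> \<ominus> x') (XS \<inter> {x'. x \<oplus> \<ominus> x' \<in> MM})"
  proof (rule inj_onI)
    fix a b assume ab: "a \<in> XS \<inter> {x'. x \<oplus> \<ominus> x' \<in> MM}" "b \<in> XS \<inter> {x'. x \<oplus> \<ominus> x' \<in> MM}"
      "x \<oplus> \<ominus> a = x \<oplus> \<ominus> b"
    have ac: "a \<in> carrier R" "b \<in> carrier R" using ab XS by auto
    have "a = x \<oplus> \<ominus> (x \<oplus> \<ominus> a)" using ac x by algebra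
    also have "\<dots> = x \<oplus> \<ominus> (x \<oplus> \<ominus> b)" using ab(3) by simp
    also have "\<dots> = b" using ac x by algebra
    finally show "a = b" .
  qed
  show "(\<lambda>x'. x \<oplus> \<ominus> x') ` (XS \<inter> {x'. x \<oplus> \<ominus> x' \<in> MM}) \<subseteq> MM" by blast
  show "finite MM" using M_sub fin finite_subset by blast
qed

lemma S2_bound:
  assumes A: "A \<subseteq> carrier R"
  shows "(\<Sum>p\<in>PP A. \<Sum>p'\<in>PP A. cd p p') \<le> card (PP A) ^ 2 + card (PP A) * card MM * card (carrier R)"
proof -
  let ?X = "XX A" and ?Y = "YY A" and ?N = "card (carrier R)" and ?m = "card MM"
  have Xs: "?X \<subseteq> carrier R" and Ys: "?Y \<subseteq> carrier R" using XX_sub YY_sub A by auto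
  have fX: "finite ?X" and fY: "finite ?Y" using Xs Ys fin finite_subset by auto
  have "(\<Sum>p\<in>PP A. \<Sum>p'\<in>PP A. cd p p') = (\<Sum>x\<in>?X. \<Sum>y\<in>?Y. \<Sum>x'\<in>?X. \<Sum>y'\<in>?Y. cd (x, y) (x', y'))"
  proof -
    have h: "(\<Sum>p\<in>?X \<times> ?Y. f p) = (\<Sum>x\<in>?X. \<Sum>y\<in>?Y. f (x,y))" for f :: "'a \<times> 'a \<Rightarrow> nat"
      using sum.cartesian_product[of "\<lambda>x y. f (x,y)" ?Y ?X] by (simp add: case_prod_beta')
    show ?thesis unfolding PP_def h ..
  qed
  also have "\<dots> = (\<Sum>x\<in>?X. \<Sum>x'\<in>?X. \<Sum>y\<in>?Y. \<Sum>y'\<in>?Y. cd (x, y) (x', y'))"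
    by (rule sum.cong[OF refl], rule sum.swap)
  also have "\<dots> \<le> (\<Sum>x\<in>?X. \<Sum>x'\<in>?X. card ?Y * card ?Y + ?N * card ?Y * of_bool (x \<oplus> \<ominus> x' \<in> MM))"
  proof (intro sum_mono)
    fix x x' assume xx: "x \<in> ?X" "x' \<in> ?X"
    hence xc: "x \<in> carrier R" "x' \<in> carrier R" using Xs by auto
    show "(\<Sum>y\<in>?Y. \<Sum>y'\<in>?Y. cd (x, y) (x', y')) \<le> card ?Y * card ?Y + ?N * card ?Y * of_bool (x \<oplus> \<ominus> x' \<in> MM)"
    proof (cases "x \<oplus> \<ominus> x' \<in> MM")
      case True thus ?thesis using cd_sum_y[OF xc Ys] by simp
    next
      case False
      hence "x \<oplus> \<ominus> x' \<in> Units R" using units_iff xc by simp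
      thus ?thesis using cd_sum_y_unit[OF xc Ys] by simp
    qed
  qed
  also have "\<dots> = (\<Sum>x\<in>?X. card ?X * (card ?Y * card ?Y) + ?N * card ?Y * card (?X \<inter> {x'. x \<oplus> \<ominus> x' \<in> MM}))"
    using fX by (simp add: sum.distrib sum_distrib_left[symmetric])
  also have "\<dots> \<le> (\<Sum>x\<in>?X. card ?X * (card ?Y * card ?Y) + ?N * card ?Y * ?m)"
    by (intro sum_mono add_left_mono mult_left_mono near_count[OF Xs]) (use Xs in auto)
  also have "\<dots> = card (PP A) ^ 2 + card (PP A) * ?m * ?N"
    unfolding PP_def by (simp add: card_cartesian_product power2_eq_square algebra_simps)
  finally show ?thesis .
qed

end

context fvr begin

lemma variance:
  assumes A: "A \<subseteq> carrier R"
  shows "(\<Sum>l\<in>carrier R \<times> carrier R. (real (nl A l) - real (card (PP A)) / real (card (carrier R)))^2)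
     \<le> real (card (PP A)) * real (card MM) * real (card (carrier R))"
proof -
  let ?U = "carrier R \<times> carrier R"
  define N where "N = real (card (carrier R))"
  define P where "P = real (card (PP A))"
  define m where "m = real (card MM)"
  have Npos: "N > 0" unfolding N_def using fin by (auto simp: card_gt_0_iff)
  have cU: "real (card ?U) = N * N" unfolding N_def by (simp add: card_cartesian_product)
  have s1: "(\<Sum>l\<in>?U. real (nl A l)) = P * N"
    unfolding P_def N_def using S1[OF A] by (metis of_nat_mult of_nat_sum)
  have s2: "(\<Sum>l\<in>?U. real (nl A l) ^ 2) \<le> P * P + P * m * N"
  proof -
    have nat: "(\<Sum>l\<in>?U. nl A l ^ 2) \<le> card (PP A) ^ 2 + card (PP A) * card MM * card (carrier R)"
      using S2[OF A] S2_bound[OF A] by simp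
    have "(\<Sum>l\<in>?U. real (nl A l) ^ 2) = real (\<Sum>l\<in>?U. nl A l ^ 2)" by simp
    also have "\<dots> \<le> real (card (PP A) ^ 2 + card (PP A) * card MM * card (carrier R))"
      using nat by (simp only: of_nat_le_iff)
    also have "\<dots> = P * P + P * m * N" unfolding P_def m_def N_def by (simp add: power2_eq_square)
    finally show ?thesis .
  qed
  have "(\<Sum>l\<in>?U. (real (nl A l) - P / N)^2)
      = (\<Sum>l\<in>?U. real (nl A l) ^ 2) - 2 * (P / N) * (\<Sum>l\<in>?U. real (nl A l)) + real (card ?U) * (P / N)^2"
    by (simp add: power2_diff sum.distrib sum_subtractf sum_distrib_left mult.assoc mult.commute)
  also have "\<dots> = (\<Sum>l\<in>?U. real (nl A l) ^ 2) - P * P"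
    using Npos unfolding s1 cU by (simp add: field_simps power2_eq_square)
  also have "\<dots> \<le> P * m * N" using s2 by simp
  finally show ?thesis unfolding P_def N_def m_def .
qed

lemma incidence:
  assumes A: "A \<subseteq> carrier R" and L: "L \<subseteq> carrier R \<times> carrier R" "L \<noteq> {}"
    and al: "\<And>l. l \<in> L \<Longrightarrow> \<alpha> \<le> real (nl A l)" and a0: "\<alpha> \<ge> 0"
  shows "real (card (carrier R)) * \<alpha> \<le> 2 * real (card (PP A)) \<or>
         real (card L) * \<alpha>^2 \<le> 4 * real (card (PP A)) * real (card MM) * real (card (carrier R))"
proof -
  let ?U = "carrier R \<times> carrier R"
  define N where "N = real (card (carrier R))"
  define P where "P = real (card (PP A))"
  define m where "m = real (card MM)"
  define f where "f l = real (nl A l) - P / N" for l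
  define c where "c = real (card L)"
  have Npos: "N > 0" unfolding N_def using fin by (auto simp: card_gt_0_iff)
  have fL: "finite L" using L fin finite_subset by (metis finite_SigmaI)
  have cpos: "c > 0" unfolding c_def using fL L by (auto simp: card_gt_0_iff)
  show ?thesis
  proof (cases "N * \<alpha> \<le> 2 * P")
  case True thus ?thesis by (simp add: N_def P_def)
  next
  case False
  hence mu: "P / N \<le> \<alpha> / 2" using Npos by (simp add: field_simps)
  have "(\<Sum>l\<in>L. \<alpha> / 2) \<le> (\<Sum>l\<in>L. f l)"
  proof (rule sum_mono)
    fix l assume "l \<in> L" thus "\<alpha> / 2 \<le> f l" using al[of l] mu unfolding f_def by linarith
  qed
  hence low: "c * \<alpha> / 2 \<le> (\<Sum>l\<in>L. f l)" unfolding c_def by simp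
  have "(\<Sum>l\<in>L. f l)^2 \<le> (\<Sum>l\<in>L. (f l)^2) * c"
    unfolding c_def by (rule sum_squared_le_sum_of_squares)
  also have "\<dots> \<le> (\<Sum>l\<in>?U. (f l)^2) * c"
    using cpos by (intro mult_right_mono sum_mono2) (use fin L in auto)
  also have "\<dots> \<le> P * m * N * c"
    using variance[OF A] cpos unfolding f_def P_def N_def m_def by (intro mult_right_mono) auto
  finally have up: "(\<Sum>l\<in>L. f l)^2 \<le> P * m * N * c" .
  have "(c * \<alpha> / 2)^2 \<le> (\<Sum>l\<in>L. f l)^2"
    using low a0 cpos by (intro power_mono) auto
  hence "(c * \<alpha> / 2)^2 \<le> P * m * N * c" using up by linarith
  hence "c * (c * \<alpha>^2) \<le> c * (4 * P * m * N)" by (simp add: power2_eq_square field_simps)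
  hence "c * \<alpha>^2 \<le> 4 * P * m * N" using cpos by simp
  thus ?thesis
    by (simp add: c_def P_def m_def N_def)
  qed
qed

end

context fvr begin

definition "linef a s = (\<ominus> ((\<one> \<oplus> \<one>) \<otimes> a), a \<otimes> a \<oplus> s)"
definition "Ap A = A - MM"
definition "Sp A = (\<lambda>c. c \<otimes> c) ` Ap A"
definition "LL A = (\<lambda>(a, s). linef a s) ` (A \<times> Sp A)"

lemma Ap_units: "A \<subseteq> carrier R \<Longrightarrow> c \<in> Ap A \<Longrightarrow> c \<in> Units R"
  unfolding Ap_def using units_iff by auto

lemma LL_sub: "A \<subseteq> carrier R \<Longrightarrow> LL A \<subseteq> carrier R \<times> carrier R"
  unfolding LL_def Sp_def Ap_def linef_def by auto

lemma LL_card: assumes two: "\<one> \<oplus> \<one> \<in> Units R" and A: "A \<subseteq> carrier R"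
  shows "card (LL A) = card A * card (Sp A)"
proof -
  have sc: "Sp A \<subseteq> carrier R" unfolding Sp_def Ap_def using A by auto
  have "inj_on (\<lambda>(a, s). linef a s) (A \<times> Sp A)"
  proof (rule inj_onI, clarify)
    fix a s a' s' assume hs: "a \<in> A" "s \<in> Sp A" "a' \<in> A" "s' \<in> Sp A" "linef a s = linef a' s'"
    have c: "a \<in> carrier R" "a' \<in> carrier R" "s \<in> carrier R" "s' \<in> carrier R" using hs A sc by auto
    have tc: "(\<one> \<oplus> \<one>) \<in> carrier R" "inv (\<one> \<oplus> \<one>) \<in> carrier R" using two by auto
    have e1: "\<ominus> ((\<one> \<oplus> \<one>) \<otimes> a) = \<ominus> ((\<one> \<oplus> \<one>) \<otimes> a')" and e2: "a \<otimes> a \<oplus> s = a' \<otimes> a' \<oplus> s'"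
      using hs(5) unfolding linef_def by auto
    have "(\<one> \<oplus> \<one>) \<otimes> a = \<ominus> (\<ominus> ((\<one> \<oplus> \<one>) \<otimes> a))" using c by simp
    also have "\<dots> = \<ominus> (\<ominus> ((\<one> \<oplus> \<one>) \<otimes> a'))" using e1 by simp
    also have "\<dots> = (\<one> \<oplus> \<one>) \<otimes> a'" using c by simp
    finally have e3: "(\<one> \<oplus> \<one>) \<otimes> a = (\<one> \<oplus> \<one>) \<otimes> a'" .
    have "a = inv (\<one> \<oplus> \<one>) \<otimes> ((\<one> \<oplus> \<one>) \<otimes> a)" using c two by (simp add: m_assoc[symmetric])
    also have "\<dots> = inv (\<one> \<oplus> \<one>) \<otimes> ((\<one> \<oplus> \<one>) \<otimes> a')" using e3 by simp
    also have "\<dots> = a'" using c two by (simp add: m_assoc[symmetric])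
    finally have aa: "a = a'" .
    have "s = \<ominus> (a \<otimes> a) \<oplus> (a \<otimes> a \<oplus> s)" using c by algebra
    also have "\<dots> = \<ominus> (a \<otimes> a) \<oplus> (a \<otimes> a \<oplus> s')" using e2 aa by simp
    also have "\<dots> = s'" using c by algebra
    finally show "a = a' \<and> s = s'" using aa by simp
  qed
  thus ?thesis unfolding LL_def by (simp add: card_image card_cartesian_product)
qed

lemma LL_nl: assumes A: "A \<subseteq> carrier R" and l: "l \<in> LL A"
  shows "card A \<le> nl A l"
proof -
  obtain a c where ac: "a \<in> A" "c \<in> Ap A" "l = linef a (c \<otimes> c)"
    using l unfolding LL_def Sp_def by auto
  have cA: "c \<in> A" using ac unfolding Ap_def by auto
  have c: "a \<in> carrier R" "c \<in> carrier R" using ac cA A by auto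
  let ?g = "\<lambda>b. (a \<oplus> b, b \<otimes> b \<oplus> c \<otimes> c)"
  show ?thesis unfolding nl_def
  proof (rule card_inj_on_le)
    show "inj_on ?g A"
    proof (rule inj_onI)
      fix b b' assume bb: "b \<in> A" "b' \<in> A" "?g b = ?g b'"
      have bc: "b \<in> carrier R" "b' \<in> carrier R" using bb A by auto
      have "b = \<ominus> a \<oplus> (a \<oplus> b)" using bc c by algebra
      also have "\<dots> = \<ominus> a \<oplus> (a \<oplus> b')" using bb(3) by simp
      also have "\<dots> = b'" using bc c by algebra
      finally show "b = b'" .
    qed
    show "?g ` A \<subseteq> {p \<in> PP A. Qi p l}"
    proof clarify
      fix b assume b: "b \<in> A"
      have bc: "b \<in> carrier R" using b A by auto
      have "a \<oplus> b \<in> XX A" unfolding XX_def ring_sumset_def using ac b by blast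
      moreover have "b \<otimes> b \<in> ring_squares R A" "c \<otimes> c \<in> ring_squares R A"
        unfolding ring_squares_def using b cA by auto
      hence "b \<otimes> b \<oplus> c \<otimes> c \<in> YY A" unfolding YY_def ring_sumset_def by blast
      moreover have "a \<otimes> a \<oplus> c \<otimes> c = Kf (a \<oplus> b) (b \<otimes> b \<oplus> c \<otimes> c) (\<ominus> ((\<one> \<oplus> \<one>) \<otimes> a))"
        unfolding Kf_def using c bc by algebra
      ultimately show "(a \<oplus> b, b \<otimes> b \<oplus> c \<otimes> c) \<in> PP A \<and> Qi (a \<oplus> b, b \<otimes> b \<oplus> c \<otimes> c) l"
        unfolding PP_def Qi_def ac(3) linef_def by simp
    qed
    show "finite {p \<in> PP A. Qi p l}" using finPP[OF A] by simp
  qed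
qed

lemma Ap_Sp: assumes two: "\<one> \<oplus> \<one> \<in> Units R" and A: "A \<subseteq> carrier R"
  shows "card (Ap A) \<le> 2 * card (Sp A)"
proof -
  define f where "f s = (SOME c. c \<in> Ap A \<and> c \<otimes> c = s)" for s
  have f: "s \<in> Sp A \<Longrightarrow> f s \<in> Ap A \<and> f s \<otimes> f s = s" for s
    unfolding f_def Sp_def by (rule someI_ex) blast
  let ?h = "\<lambda>c. (c \<otimes> c, c = f (c \<otimes> c))"
  have "inj_on ?h (Ap A)"
  proof (rule inj_onI)
    fix c d assume cd: "c \<in> Ap A" "d \<in> Ap A" "?h c = ?h d"
    hence s: "c \<otimes> c = d \<otimes> d" and b: "(c = f (c \<otimes> c)) = (d = f (c \<otimes> c))" by auto
    let ?e = "f (c \<otimes> c)"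
    have e: "?e \<in> Ap A" "?e \<otimes> ?e = c \<otimes> c" using f[of "c \<otimes> c"] cd unfolding Sp_def by auto
    have u: "c \<in> Units R" "d \<in> Units R" "?e \<in> Units R" using Ap_units[OF A] cd e by auto
    have "c = ?e \<or> c = \<ominus> ?e" using sq_eq[OF two u(3) u(1)] e by simp
    moreover have "d = ?e \<or> d = \<ominus> ?e" using sq_eq[OF two u(3) u(2)] e s by simp
    ultimately show "c = d" using b by auto
  qed
  hence "card (Ap A) = card (?h ` Ap A)" by (simp add: card_image)
  also have "\<dots> \<le> card (Sp A \<times> (UNIV :: bool set))"
  proof (rule card_mono)
    have "Sp A \<subseteq> carrier R" unfolding Sp_def Ap_def using A by auto
    hence "finite (Sp A)" using fin finite_subset by blast
    thus "finite (Sp A \<times> (UNIV :: bool set))" by simp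
    show "?h ` Ap A \<subseteq> Sp A \<times> UNIV" unfolding Sp_def by auto
  qed
  also have "\<dots> = 2 * card (Sp A)" by (simp add: card_cartesian_product)
  finally show ?thesis .
qed

lemma Ap_card: assumes A: "A \<subseteq> carrier R" shows "card A \<le> card (Ap A) + card MM"
proof -
  have fM: "finite MM" using M_sub fin finite_subset by blast
  have "A \<subseteq> Ap A \<union> (A \<inter> MM)" unfolding Ap_def by auto
  hence "card A \<le> card (Ap A \<union> (A \<inter> MM))"
  proof (rule card_mono[rotated])
    show "finite (Ap A \<union> (A \<inter> MM))" by (rule finite_subset[OF _ fin]) (use A in \<open>auto simp: Ap_def\<close>)
  qed
  also have "\<dots> \<le> card (Ap A) + card (A \<inter> MM)" by (rule card_Un_le)
  also have "card (A \<inter> MM) \<le> card MM" by (rule card_mono[OF fM]) auto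
  finally show ?thesis by simp
qed

end

context fvr begin

lemma main:
  assumes two: "\<one> \<oplus> \<one> \<in> Units R" and A: "A \<subseteq> carrier R"
    and hA: "real (card A) \<ge> 2 * real qq ^ (r0 - 1)"
    and hc: "real (card (XX A)) * real (card A) ^ 2 \<ge> c * real qq ^ (3 * r0 - 1)"
    and c: "c > 0"
  shows "real (max (card (XX A)) (card (YY A))) ^ 3 \<ge> min (1/2) (c/16) * real qq ^ r0 * real (card A) ^ 2"
proof -
  define a where "a = real (card A)"
  define x where "x = real (card (XX A))"
  define y where "y = real (card (YY A))"
  define m where "m = real (card MM)"
  define N where "N = real (card (carrier R))"
  define M0 where "M0 = real (max (card (XX A)) (card (YY A)))"
  have mq: "m = real qq ^ (r0 - 1)" unfolding m_def using card_M by simp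
  have Nq: "N = real qq ^ r0" unfolding N_def using card_R by simp
  have qpos: "real qq > 0" using qq_pos by simp
  have m1: "m \<ge> 1" unfolding mq using qpos qq_pos by (simp add: one_le_power)
  have am: "a \<ge> 2 * m" using hA mq a_def by simp
  have apos: "a > 0" using am m1 by simp
  have fA: "finite A" using A fin finite_subset by blast
  have Ane: "A \<noteq> {}" using apos a_def by auto
  have fX: "finite (XX A)" using XX_sub[OF A] fin finite_subset by blast
  have xa: "a \<le> x"
  proof -
    obtain a0 where a0: "a0 \<in> A" using Ane by blast
    have "card A \<le> card (XX A)"
    proof (rule card_inj_on_le[OF _ _ fX])
      show "inj_on (\<lambda>b. a0 \<oplus> b) A"
      proof (rule inj_onI)
        fix b b' assume bb: "b \<in> A" "b' \<in> A" "a0 \<oplus> b = a0 \<oplus> b'"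
        have c: "b \<in> carrier R" "b' \<in> carrier R" "a0 \<in> carrier R" using bb a0 A by auto
        have "b = \<ominus> a0 \<oplus> (a0 \<oplus> b)" using c by algebra
        also have "\<dots> = \<ominus> a0 \<oplus> (a0 \<oplus> b')" using bb(3) by simp
        also have "\<dots> = b'" using c by algebra
        finally show "b = b'" .
      qed
      show "(\<lambda>b. a0 \<oplus> b) ` A \<subseteq> XX A" unfolding XX_def ring_sumset_def using a0 by blast
    qed
    thus ?thesis unfolding a_def x_def by simp
  qed
  have ypos: "y \<ge> 0" unfolding y_def by simp
  have PP: "real (card (PP A)) = x * y" unfolding PP_def x_def y_def by (simp add: card_cartesian_product)
  have M0x: "x \<le> M0" and M0y: "y \<le> M0" unfolding M0_def x_def y_def by auto
  have M03: "x * x * y \<le> M0 ^ 3"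
  proof -
    have "x * x * y \<le> M0 * M0 * M0"
      using M0x M0y xa apos ypos by (intro mult_mono) auto
    thus ?thesis by (simp add: power3_eq_cube)
  qed
  have Ap: "a \<le> real (card (Ap A)) + m" using Ap_card[OF A] unfolding a_def m_def by linarith
  have Sp: "real (card (Ap A)) \<le> 2 * real (card (Sp A))" using Ap_Sp[OF two A] by linarith
  have cL: "real (card (LL A)) = a * real (card (Sp A))" using LL_card[OF two A] unfolding a_def by simp
  have cL4: "a * a / 4 \<le> real (card (LL A))"
  proof -
    have "a / 4 \<le> real (card (Sp A))" using Ap Sp am by linarith
    hence "a * (a / 4) \<le> a * real (card (Sp A))" using apos by (intro mult_left_mono) auto
    thus ?thesis using cL by simp
  qed
  have Lne: "LL A \<noteq> {}"
  proof
    assume "LL A = {}"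
    hence "a * a \<le> 0" using cL4 by simp
    moreover have "a * a > 0" using apos by simp
    ultimately show False by linarith
  qed
  have "N * a \<le> 2 * (x * y) \<or> real (card (LL A)) * a^2 \<le> 4 * (x * y) * m * N"
    using incidence[OF A LL_sub[OF A] Lne, of a] LL_nl[OF A] apos PP
    unfolding a_def N_def m_def by auto
  thus ?thesis
  proof
    assume h: "N * a \<le> 2 * (x * y)"
    have "0 \<le> 2 * (x * y)" using xa apos ypos by simp
    from mult_mono[OF h xa this] have "N * a * a \<le> 2 * (x * y) * x" using apos by simp
    hence "N * a^2 / 2 \<le> M0 ^ 3" using M03 by (simp add: power2_eq_square algebra_simps)
    moreover have "min (1/2) (c/16) * (N * a^2) \<le> 1/2 * (N * a^2)"
      using Nq qpos by (intro mult_right_mono) auto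
    hence "min (1/2) (c/16) * N * a^2 \<le> N * a^2 / 2" by (simp add: mult.assoc)
    ultimately show ?thesis unfolding M0_def a_def Nq by simp
  next
    assume h: "real (card (LL A)) * a^2 \<le> 4 * (x * y) * m * N"
    have mN: "m * N = real qq ^ (2 * r0 - 1)" using r0(1) mq Nq
      by (simp add: power_add[symmetric] mult_2)
    have q3: "real qq ^ (3 * r0 - 1) = real qq ^ r0 * (m * N)" using r0(1) mN
    proof -
      have "3 * r0 - 1 = r0 + (2 * r0 - 1)" using r0(1) by simp
      thus ?thesis using mN by (simp add: power_add)
    qed
    have "a * a / 4 * a^2 \<le> 4 * (x * y) * m * N"
      using h cL4 apos by (meson mult_right_mono order_trans zero_le_power2 )
    hence a4: "a^4 \<le> 16 * (x * y) * (m * N)" by (simp add: power2_eq_square power4_eq_xxxx algebra_simps)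
    have "c * (real qq ^ r0 * (m * N)) \<le> x * a^2"
      using hc q3 unfolding x_def a_def by simp
    hence "c * (real qq ^ r0 * (m * N)) * a^2 \<le> x * a^2 * a^2" by (rule mult_right_mono) simp
    hence "c * real qq ^ r0 * (m * N) * a^2 \<le> x * a^2 * a^2" by (simp add: mult.assoc)
    also have "\<dots> = x * a^4" by (simp add: power2_eq_square power4_eq_xxxx)
    also have "\<dots> \<le> x * (16 * (x * y) * (m * N))" using a4 xa apos by (intro mult_left_mono) auto
    finally have "c * real qq ^ r0 * a^2 * (m * N) \<le> (16 * (x * x * y)) * (m * N)"
      by (simp add: algebra_simps)
    moreover have "m * N > 0" using m1 Nq qpos by simp
    ultimately have "c * real qq ^ r0 * a^2 \<le> 16 * (x * x * y)" by (rule mult_right_le_imp_le)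
    hence "c / 16 * real qq ^ r0 * a^2 \<le> M0 ^ 3" using M03 by simp
    moreover have "min (1/2) (c/16) * real qq ^ r0 * a^2 \<le> c / 16 * real qq ^ r0 * a^2"
      using qpos by (intro mult_right_mono) auto
    ultimately show ?thesis unfolding M0_def a_def by simp
  qed
qed

end

context fvr begin

lemma final:
  assumes oddq: "odd (card (carrier (R Quot MM)))" and A: "A \<subseteq> carrier R"
    and hA: "real (card A) \<ge> 2 * real (card (carrier (R Quot MM))) ^ ((LEAST n::nat. n > 0 \<and> z [^] n = \<zero>) - 1)"
    and hc: "real (card (ring_sumset R A)) * real (card A) ^ 2 \<ge> c * real (card (carrier (R Quot MM))) ^ (3 * (LEAST n::nat. n > 0 \<and> z [^] n = \<zero>) - 1)"
    and c: "c > 0"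
  shows "real (max (card (ring_sumset R A)) (card (ring_sumset R (ring_squares R A))))
     \<ge> (min (1/2) (c/16)) powr (1/3) * real (card (carrier (R Quot MM))) powr (real (LEAST n::nat. n > 0 \<and> z [^] n = \<zero>) / 3) * real (card A) powr (2 / 3)"
proof -
  have qe: "card (carrier (R Quot MM)) = qq" unfolding qq_def FactRing_def by simp
  have re: "(LEAST n::nat. n > 0 \<and> z [^] n = \<zero>) = r0" unfolding r0_def ..
  have two: "\<one> \<oplus> \<one> \<in> Units R" using two_unit oddq qe by simp
  define D where "D = min (1/2::real) (c/16)"
  have Dpos: "D > 0" unfolding D_def using c by simp
  define M0 where "M0 = real (max (card (ring_sumset R A)) (card (ring_sumset R (ring_squares R A))))"
  define a where "a = real (card A)"
  define q where "q = real qq"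
  have qpos: "q > 0" unfolding q_def using qq_pos by simp
  have m3: "D * q ^ r0 * a ^ 2 \<le> M0 ^ 3"
    using main[OF two A, of c] hA hc c unfolding qe re D_def M0_def a_def q_def XX_def YY_def by simp
  have apos: "a > 0"
  proof -
    have "real qq ^ (r0 - 1) > 0" using qq_pos by simp
    thus ?thesis using hA unfolding a_def qe re by linarith
  qed
  have M0pos: "M0 > 0"
  proof -
    have "0 < D * q ^ r0 * a ^ 2" using Dpos qpos apos by simp
    also have "\<dots> \<le> M0 ^ 3" by (rule m3)
    finally have "0 < M0 ^ 3" .
    moreover have "M0 \<ge> 0" unfolding M0_def by simp
    ultimately show ?thesis by (cases "M0 = 0") auto
  qed
  have "D powr (1/3) * q powr (real r0 / 3) * a powr (2/3) = (D * q ^ r0 * a ^ 2) powr (1/3)"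
  proof -
    have "(D * q ^ r0 * a ^ 2) powr (1/3) = D powr (1/3) * (q ^ r0) powr (1/3) * (a ^ 2) powr (1/3)"
      using Dpos qpos apos by (simp add: powr_mult)
    also have "(q ^ r0) powr (1/3) = q powr (real r0 / 3)"
    proof -
      have "q ^ r0 = q powr (real r0)" using qpos by (simp add: powr_realpow)
      thus ?thesis by (simp add: powr_powr)
    qed
    also have "(a ^ 2) powr (1/3) = a powr (2/3)"
    proof -
      have "a ^ 2 = a powr (real 2)" using apos by (simp only: powr_realpow)
      thus ?thesis by (simp add: powr_powr)
    qed
    finally show ?thesis by simp
  qed
  also have "\<dots> \<le> (M0 ^ 3) powr (1/3)"
    using m3 Dpos qpos apos by (intro powr_mono2) auto
  also have "\<dots> = M0"
  proof -
    have "(M0 ^ 3) powr (1/3) = (M0 powr (real 3)) powr (1/3)" using M0pos by (simp only: powr_realpow)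
    also have "\<dots> = M0 powr (real 3 * (1/3))" by (rule powr_powr)
    also have "\<dots> = M0" using M0pos by simp
    finally show ?thesis .
  qed
  finally show ?thesis unfolding D_def M0_def a_def q_def qe re .
qed

end

theorem theorem1p5:
  "\<forall>c::real. c > 0 \<longrightarrow>
     (\<exists>C::real. C > 0 \<and>
       (\<forall>(R::'a ring) z q r p k.
          finite_valuation_ring R \<longrightarrow>
          z \<in> carrier R \<longrightarrow> maximalideal (PIdl\<^bsub>R\<^esub> z) R \<longrightarrow>
          q = card (carrier (R Quot (PIdl\<^bsub>R\<^esub> z))) \<longrightarrow>
          r = (LEAST n::nat. n > 0 \<and> z [^]\<^bsub>R\<^esub> n = \<zero>\<^bsub>R\<^esub>) \<longrightarrow>
          Factorial_Ring.prime (p::nat) \<longrightarrow> odd p \<longrightarrow> k > 0 \<longrightarrow> q = p ^ k \<longrightarrow>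
          (\<forall>A. A \<subseteq> carrier R \<longrightarrow>
             real (card A) \<ge> 2 * real q ^ (r - 1) \<longrightarrow>
             real (card (ring_sumset R A)) * real (card A) ^ 2 \<ge> c * real q ^ (3 * r - 1) \<longrightarrow>
             real (max (card (ring_sumset R A)) (card (ring_sumset R (ring_squares R A))))
               \<ge> C * real q powr (real r / 3) * real (card A) powr (2 / 3))))"
proof (intro allI impI)
  fix c :: real assume c: "c > 0"
  show "\<exists>C::real. C > 0 \<and>
       (\<forall>(R::'a ring) z q r p k.
          finite_valuation_ring R \<longrightarrow>
          z \<in> carrier R \<longrightarrow> maximalideal (PIdl\<^bsub>R\<^esub> z) R \<longrightarrow>
          q = card (carrier (R Quot (PIdl\<^bsub>R\<^esub> z))) \<longrightarrow>
          r = (LEAST n::nat. n > 0 \<and> z [^]\<^bsub>R\<^esub> n = \<zero>\<^bsub>R\<^esub>) \<longrightarrow>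
          Factorial_Ring.prime (p::nat) \<longrightarrow> odd p \<longrightarrow> k > 0 \<longrightarrow> q = p ^ k \<longrightarrow>
          (\<forall>A. A \<subseteq> carrier R \<longrightarrow>
             real (card A) \<ge> 2 * real q ^ (r - 1) \<longrightarrow>
             real (card (ring_sumset R A)) * real (card A) ^ 2 \<ge> c * real q ^ (3 * r - 1) \<longrightarrow>
             real (max (card (ring_sumset R A)) (card (ring_sumset R (ring_squares R A))))
               \<ge> C * real q powr (real r / 3) * real (card A) powr (2 / 3)))"
  proof (intro exI[of _ "(min (1/2) (c/16)) powr (1/3)"] conjI allI impI)
    show "(min (1/2) (c/16)) powr (1/3) > (0::real)" using c by simp
    fix R :: "'a ring" and z q r and p :: nat and k :: nat and A
    assume fv: "finite_valuation_ring R" and zc: "z \<in> carrier R" and zm: "maximalideal (PIdl\<^bsub>R\<^esub> z) R"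
      and hq: "q = card (carrier (R Quot (PIdl\<^bsub>R\<^esub> z)))"
      and hr: "r = (LEAST n::nat. n > 0 \<and> z [^]\<^bsub>R\<^esub> n = \<zero>\<^bsub>R\<^esub>)"
      and pp: "Factorial_Ring.prime p" and po: "odd p" and kp: "k > 0" and qp: "q = p ^ k"
      and As: "A \<subseteq> carrier R" and hA: "real (card A) \<ge> 2 * real q ^ (r - 1)"
      and hc: "real (card (ring_sumset R A)) * real (card A) ^ 2 \<ge> c * real q ^ (3 * r - 1)"
    have F: "fvr R z" unfolding fvr_def fvr_axioms_def
      using fv zc zm unfolding finite_valuation_ring_def by auto
    have oddq: "odd (card (carrier (R Quot (PIdl\<^bsub>R\<^esub> z))))" proof -
      have "odd q" using qp po by simp
      thus ?thesis using hq by simp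
    qed
    have "real (max (card (ring_sumset R A)) (card (ring_sumset R (ring_squares R A))))
     \<ge> (min (1/2) (c/16)) powr (1/3) * real (card (carrier (R Quot (PIdl\<^bsub>R\<^esub> z)))) powr (real (LEAST n::nat. n > 0 \<and> z [^]\<^bsub>R\<^esub> n = \<zero>\<^bsub>R\<^esub>) / 3) * real (card A) powr (2 / 3)"
      by (rule fvr.final[OF F oddq As hA[unfolded hq hr] hc[unfolded hq hr] c])
    thus "real (max (card (ring_sumset R A)) (card (ring_sumset R (ring_squares R A))))
               \<ge> (min (1/2) (c/16)) powr (1/3) * real q powr (real r / 3) * real (card A) powr (2 / 3)"
      unfolding hq hr .
  qed
qed

end
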